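(* Let $A\in\mathbb{R}^{n\times n}$ and $B\in\mathbb{R}^{n\times m}$ with $\rho(|A|)<1$, and let $T$ be a positive integer. Let $i,j\in\{1,\dots,n\}$, $i\neq j$, and $w\in\mathbb{R}$ be such that $\rho(|A|+|w|e_je_i^{\top})<1$. Then $$\operatorname{tr}(\mathcal{W}_A)\le\operatorname{tr}(\mathcal{W}^{\infty}_A)\le\operatorname{tr}(\mathcal{H}_{\mathcal{X}})$$ and $$\operatorname{tr}(\mathcal{W}_{A+we_je_i^{\top}})\le(1+\alpha\beta)\operatorname{tr}(\mathcal{H}_{\mathcal{X}})+\alpha^2\gamma\bar{\gamma}.$$
   Context: $|\cdot|$ is taken entrywise; $\rho$ is the spectral radius; $e_k$ is the $k$-th canonical unit vector; $\|\cdot\|$ is the Euclidean norm. For $Z\in\mathbb{R}^{n\times n}$, $\mathcal{W}_Z=\sum_{t=0}^{T-1}Z^tBB^{\top}(Z^t)^{\top}$ and $\mathcal{W}^\infty_Z=\sum_{t=0}^{\infty}Z^tBB^{\top}(Z^t)^{\top}$. Define $\mathcal{X}=(I-|A|)^{-1}$, $\mathcal{H}_{\mathcal{X}}=\mathcal{X}|B||B|^{\top}\mathcal{X}^{\top}$, $\alpha_{pq}=\frac{|w|}{1-|w|e_p^{\top}\mathcal{X}e_q}$, $\alpha=\max_{p\neq q}\alpha_{pq}$, $\beta=\max\{\max_{p\neq q}2e_p^{\top}\mathcal{X}e_q,\ \max_{p\neq q}e_p^{\top}\mathcal{X}e_q+\max_{q}\|\mathcal{X}e_q\|\}$, $\gamma=\max_k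 e_k^{\top}\mathcal{X}^{\top}\mathcal{X}e_k$, $\bar\gamma=\max_k e_k^{\top}\mathcal{X}|B||B|^{\top}\mathcal{X}^{\top}e_k$. *)

theory Defs
  imports "Jordan_Normal_Form.Spectral_Radius" "Jordan_Normal_Form.Gauss_Jordan_Elimination"
begin

(* Matrices are JNF matrices; indices are 0-based (paper's 1..n becomes 0..<n). *)

definition abs_mat :: "real mat \<Rightarrow> real mat" where
  "abs_mat A = map_mat abs A"

definition rho :: "real mat \<Rightarrow> real" where
  "rho A = spectral_radius (map_mat complex_of_real A)"

definition tr :: "real mat \<Rightarrow> real" where
  "tr A = (\<Sum>k<dim_row A. A $$ (k,k))"

definition unit_outer :: "nat \<Rightarrow> nat \<Rightarrow> nat \<Rightarrow> real mat" where
  "unit_outer n j i = mat n n (\<lambda>(r,c). if r = j \<and> c = i then 1 else 0)"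

definition W_fin :: "nat \<Rightarrow> real mat \<Rightarrow> real mat \<Rightarrow> real mat" where
  "W_fin T Z B = mat (dim_row Z) (dim_row Z)
     (\<lambda>(r,c). \<Sum>t<T. ((Z ^\<^sub>m t) * B * B\<^sup>T * (Z ^\<^sub>m t)\<^sup>T) $$ (r,c))"

definition W_inf :: "real mat \<Rightarrow> real mat \<Rightarrow> real mat" where
  "W_inf Z B = mat (dim_row Z) (dim_row Z)
     (\<lambda>(r,c). \<Sum>t. ((Z ^\<^sub>m t) * B * B\<^sup>T * (Z ^\<^sub>m t)\<^sup>T) $$ (r,c))"

definition Xmat :: "real mat \<Rightarrow> real mat" where
  "Xmat A = the (mat_inverse (1\<^sub>m (dim_row A) - abs_mat A))"

definition Hmat :: "real mat \<Rightarrow> real mat \<Rightarrow> real mat" where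
  "Hmat A B = Xmat A * abs_mat B * (abs_mat B)\<^sup>T * (Xmat A)\<^sup>T"

definition alpha_pq :: "real mat \<Rightarrow> real \<Rightarrow> nat \<Rightarrow> nat \<Rightarrow> real" where
  "alpha_pq A w p q = \<bar>w\<bar> / (1 - \<bar>w\<bar> * Xmat A $$ (p,q))"

definition alpha :: "real mat \<Rightarrow> real \<Rightarrow> real" where
  "alpha A w = Max {alpha_pq A w p q | p q. p < dim_row A \<and> q < dim_row A \<and> p \<noteq> q}"

definition col_norm :: "real mat \<Rightarrow> nat \<Rightarrow> real" where
  "col_norm X q = sqrt (\<Sum>r<dim_row X. (X $$ (r,q))\<^sup>2)"

definition beta :: "real mat \<Rightarrow> real" where
  "beta A = (let n = dim_row A; X = Xmat A;
              mo = Max {X $$ (p,q) | p q. p < n \<and> q < n \<and> p \<noteq> q} in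
     max (Max {2 * X $$ (p,q) | p q. p < n \<and> q < n \<and> p \<noteq> q})
         (mo + Max {col_norm X q | q. q < n}))"

definition gamma :: "real mat \<Rightarrow> real" where
  "gamma A = Max {((Xmat A)\<^sup>T * Xmat A) $$ (k,k) | k. k < dim_row A}"

definition gamma_bar :: "real mat \<Rightarrow> real mat \<Rightarrow> real" where
  "gamma_bar A B = Max {Hmat A B $$ (k,k) | k. k < dim_row A}"

end

theory Submission
  imports Defs
begin

lemma sr_nonneg: assumes "K \<in> carrier_mat n n" "n > 0"
  shows "0 \<le> spectral_radius K"
  using spectral_radius_mem_max(1)[OF assms] by auto

lemma sr_smult: fixes K :: "complex mat" and s :: real
  assumes K: "K \<in> carrier_mat n n" and n: "n > 0" and s: "s > 0"
  shows "spectral_radius (complex_of_real s \<cdot>\<^sub>m K) \<le> s * spectral_radius K"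
proof -
  have sK: "complex_of_real s \<cdot>\<^sub>m K \<in> carrier_mat n n" using K by auto
  from spectral_radius_mem_max(1)[OF sK n] obtain l where
    l: "l \<in> spectrum (complex_of_real s \<cdot>\<^sub>m K)" and eq: "spectral_radius (complex_of_real s \<cdot>\<^sub>m K) = norm l" by auto
  from l obtain v where v: "v \<in> carrier_vec n" "v \<noteq> 0\<^sub>v n" "(complex_of_real s \<cdot>\<^sub>m K) *\<^sub>v v = l \<cdot>\<^sub>v v"
    unfolding spectrum_def eigenvalue_def eigenvector_def using sK by auto
  have "K *\<^sub>v v = (l / complex_of_real s) \<cdot>\<^sub>v v"
  proof (rule eq_vecI)
    fix i assume i: "i < dim_vec ((l / complex_of_real s) \<cdot>\<^sub>v v)"
    hence i': "i < n" using v by auto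
    have e0: "((complex_of_real s \<cdot>\<^sub>m K) *\<^sub>v v) $ i = (l \<cdot>\<^sub>v v) $ i" using v by simp
    have e1: "((complex_of_real s \<cdot>\<^sub>m K) *\<^sub>v v) $ i = complex_of_real s * (K *\<^sub>v v) $ i"
      using i' K v(1) by (simp add: scalar_prod_def sum_distrib_left mult.assoc)
    have "complex_of_real s * (K *\<^sub>v v) $ i = l * v $ i"
      using e0 e1 i' v by simp
    thus "(K *\<^sub>v v) $ i = ((l / complex_of_real s) \<cdot>\<^sub>v v) $ i"
      using i' v s by (simp add: field_simps)
  qed (use K v in auto)
  hence "l / complex_of_real s \<in> spectrum K"
    unfolding spectrum_def eigenvalue_def eigenvector_def using K v by auto
  from spectral_radius_mem_max(2)[OF K n] this
  have "norm (l / complex_of_real s) \<le> spectral_radius K" by auto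
  hence "norm l / s \<le> spectral_radius K" using s by (simp add: norm_divide)
  thus ?thesis using eq s by (simp add: field_simps)
qed

lemma pow_decay: fixes N :: "real mat"
  assumes N: "N \<in> carrier_mat n n" and n: "n > 0" and r: "rho N < 1"
    and rr: "r < n" and cc: "c < n"
  shows "(\<lambda>t. (N ^\<^sub>m t) $$ (r,c)) \<longlonglongrightarrow> 0"
proof -
  define NC where "NC = map_mat complex_of_real N"
  have NC: "NC \<in> carrier_mat n n" using N by (auto simp: NC_def)
  define \<rho> where "\<rho> = rho N"
  have r0: "0 \<le> \<rho>" using sr_nonneg[OF NC n] by (simp add: \<rho>_def rho_def NC_def)
  define q where "q = (1 + \<rho>) / 2"
  have q: "\<rho> < q" "q < 1" "0 < q" using r r0 by (auto simp: q_def \<rho>_def)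
  define s where "s = 1 / q"
  have s: "s > 0" using q by (simp add: s_def)
  define K where "K = complex_of_real s \<cdot>\<^sub>m NC"
  have K: "K \<in> carrier_mat n n" using NC by (simp add: K_def)
  have "spectral_radius K \<le> s * \<rho>" using sr_smult[OF NC n s] by (simp add: K_def \<rho>_def rho_def NC_def)
  also have "\<dots> < s * q" using q s by simp
  also have "\<dots> = 1" using q by (simp add: s_def)
  finally have "spectral_radius K < 1" .
  from spectral_radius_jnf_norm_bound_less_1_upper_triangular[OF K this]
  obtain b where b: "\<And>k. norm_bound (K ^\<^sub>m k) b" by auto
  have Kpow: "K ^\<^sub>m k = complex_of_real (s ^ k) \<cdot>\<^sub>m map_mat complex_of_real (N ^\<^sub>m k)" for k
  proof (induct k)
    case 0 show ?case using N by (intro eq_matI) (auto simp: K_def NC_def)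
  next
    case (Suc k)
    have "K ^\<^sub>m Suc k = (complex_of_real (s ^ k) \<cdot>\<^sub>m map_mat complex_of_real (N ^\<^sub>m k)) * K"
      using Suc by simp
    also have "\<dots> = complex_of_real (s ^ Suc k) \<cdot>\<^sub>m map_mat complex_of_real (N ^\<^sub>m Suc k)"
    proof (rule eq_matI)
      fix i j assume ij: "i < dim_row (complex_of_real (s ^ Suc k) \<cdot>\<^sub>m map_mat complex_of_real (N ^\<^sub>m Suc k))"
        "j < dim_col (complex_of_real (s ^ Suc k) \<cdot>\<^sub>m map_mat complex_of_real (N ^\<^sub>m Suc k))"
      hence i: "i < n" and j: "j < n" using N by auto
      show "((complex_of_real (s ^ k) \<cdot>\<^sub>m map_mat complex_of_real (N ^\<^sub>m k)) * K) $$ (i, j) =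
        (complex_of_real (s ^ Suc k) \<cdot>\<^sub>m map_mat complex_of_real (N ^\<^sub>m Suc k)) $$ (i, j)"
        using i j N NC by (simp add: K_def NC_def scalar_prod_def sum_distrib_left mult_ac)
    qed (use N NC in \<open>auto simp: K_def\<close>)
    finally show ?case .
  qed
  have bound: "\<bar>(N ^\<^sub>m t) $$ (r,c)\<bar> \<le> b * q ^ t" for t
  proof -
    have "norm ((K ^\<^sub>m t) $$ (r,c)) \<le> b" using b[of t] rr cc K unfolding norm_bound_def by auto
    hence "s ^ t * \<bar>(N ^\<^sub>m t) $$ (r,c)\<bar> \<le> b" using rr cc N s
      by (simp add: Kpow norm_mult abs_mult norm_power)
    hence "\<bar>(N ^\<^sub>m t) $$ (r,c)\<bar> \<le> b / s ^ t" using s by (simp add: field_simps)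
    thus ?thesis by (simp add: s_def power_one_over)
  qed
  have q0: "(\<lambda>t. q ^ t) \<longlonglongrightarrow> 0" using q by (intro LIMSEQ_power_zero) simp
  have l1: "(\<lambda>t. b * q ^ t) \<longlonglongrightarrow> 0" using tendsto_mult[OF tendsto_const q0, of b] by simp
  have l2: "(\<lambda>t. - (b * q ^ t)) \<longlonglongrightarrow> 0" using tendsto_minus[OF l1] by simp
  have b1: "\<forall>t. - (b * q ^ t) \<le> (N ^\<^sub>m t) $$ (r,c)" and b2: "\<forall>t. (N ^\<^sub>m t) $$ (r,c) \<le> b * q ^ t"
    using bound by (simp_all add: abs_le_iff minus_le_iff)
  show ?thesis
    by (rule tendsto_sandwich[OF always_eventually always_eventually l2 l1]) (use b1 b2 in auto)
qed

definition nonneg_mat :: "nat \<Rightarrow> real mat \<Rightarrow> bool" where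
  "nonneg_mat n N = (\<forall>r c. r < n \<longrightarrow> c < n \<longrightarrow> 0 \<le> N $$ (r,c))"

definition decays :: "nat \<Rightarrow> real mat \<Rightarrow> bool" where
  "decays n N = (\<forall>r c. r < n \<longrightarrow> c < n \<longrightarrow> (\<lambda>t. (N ^\<^sub>m t) $$ (r,c)) \<longlonglongrightarrow> 0)"

lemma pow_nonneg: assumes N: "N \<in> carrier_mat n n" and nn: "nonneg_mat n N"
  shows "nonneg_mat n (N ^\<^sub>m t)"
proof (induct t)
  case 0 thus ?case using N by (simp add: nonneg_mat_def)
next
  case (Suc t)
  show ?case unfolding nonneg_mat_def
  proof (intro allI impI)
    fix r c assume rc: "r < n" "c < n"
    have "(N ^\<^sub>m Suc t) $$ (r,c) = (\<Sum>k<n. (N ^\<^sub>m t) $$ (r,k) * N $$ (k,c))"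
      using rc N by (simp add: scalar_prod_def atLeast0LessThan)
    also have "\<dots> \<ge> 0" using Suc nn rc unfolding nonneg_mat_def
      by (intro sum_nonneg mult_nonneg_nonneg) auto
    finally show "0 \<le> (N ^\<^sub>m Suc t) $$ (r,c)" .
  qed
qed

lemma decay_inj: assumes N: "N \<in> carrier_mat n n" and dec: "decays n N"
  and v: "v \<in> carrier_vec n" and eq: "(1\<^sub>m n - N) *\<^sub>v v = 0\<^sub>v n"
  shows "v = 0\<^sub>v n"
proof -
  have Nv: "N *\<^sub>v v = v"
  proof (rule eq_vecI)
    fix i assume "i < dim_vec v"
    hence i: "i < n" using v by auto
    have "((1\<^sub>m n - N) *\<^sub>v v) $ i = 0" using eq i by simp
    hence "(\<Sum>k = 0..<n. (1\<^sub>m n - N) $$ (i,k) * v $ k) = 0" using i N v by (simp add: scalar_prod_def)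
    moreover have "(\<Sum>k = 0..<n. (1\<^sub>m n - N) $$ (i,k) * v $ k) = (\<Sum>k = 0..<n. (if i = k then v $ k else 0) - N $$ (i,k) * v $ k)"
      using i N by (intro sum.cong) (auto simp: left_diff_distrib)
    moreover have "\<dots> = v $ i - (\<Sum>k = 0..<n. N $$ (i,k) * v $ k)"
      using i by (simp add: sum_subtractf)
    ultimately have "v $ i - (\<Sum>k = 0..<n. N $$ (i,k) * v $ k) = 0" by simp
    thus "(N *\<^sub>v v) $ i = v $ i" using i N v by (simp add: scalar_prod_def)
  qed (use N v in auto)
  have pw: "(N ^\<^sub>m t) *\<^sub>v v = v" for t
  proof (induct t)
    case 0 show ?case using v N by simp
  next
    case (Suc t)
    have "(N ^\<^sub>m Suc t) *\<^sub>v v = (N ^\<^sub>m t * N) *\<^sub>v v" by simp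
    also have "\<dots> = (N ^\<^sub>m t) *\<^sub>v (N *\<^sub>v v)" using N v by (intro assoc_mult_mat_vec) auto
    finally show ?case using Nv Suc by simp
  qed
  show ?thesis
  proof (rule eq_vecI)
    fix i assume "i < dim_vec (0\<^sub>v n)"
    hence i: "i < n" by auto
    have e: "v $ i = (\<Sum>k = 0..<n. (N ^\<^sub>m t) $$ (i,k) * v $ k)" for t
      using arg_cong[OF pw[of t], of "\<lambda>x. x $ i"] i N v by (simp add: scalar_prod_def)
    have "(\<lambda>t. (\<Sum>k = 0..<n. (N ^\<^sub>m t) $$ (i,k) * v $ k)) \<longlonglongrightarrow> (\<Sum>k = 0..<n. 0 * v $ k)"
      using dec i unfolding decays_def by (intro tendsto_sum tendsto_mult tendsto_const) auto
    hence "(\<lambda>t. v $ i) \<longlonglongrightarrow> 0" unfolding e[symmetric] by simp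
    hence "v $ i = 0" by (simp add: LIMSEQ_const_iff)
    thus "v $ i = 0\<^sub>v n $ i" using i by simp
  qed (use v in auto)
qed

lemma neumann_bound: assumes N: "N \<in> carrier_mat n n" and nn: "nonneg_mat n N" and dec: "decays n N"
  and Y: "Y \<in> carrier_mat n n" and inv: "(1\<^sub>m n - N) * Y = 1\<^sub>m n"
  shows "nonneg_mat n Y" and "\<And>T r c. r < n \<Longrightarrow> c < n \<Longrightarrow> (\<Sum>t<T. (N ^\<^sub>m t) $$ (r,c)) \<le> Y $$ (r,c)"
proof -
  have step: "N ^\<^sub>m T * Y - N ^\<^sub>m Suc T * Y = N ^\<^sub>m T" for T
  proof -
    have P: "N ^\<^sub>m T \<in> carrier_mat n n" using N by auto
    have "N ^\<^sub>m T = N ^\<^sub>m T * ((1\<^sub>m n - N) * Y)" using inv right_mult_one_mat[OF P] by simp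
    also have "\<dots> = (N ^\<^sub>m T * (1\<^sub>m n - N)) * Y" using P N Y by (intro assoc_mult_mat[symmetric]) auto
    also have "N ^\<^sub>m T * (1\<^sub>m n - N) = N ^\<^sub>m T - N ^\<^sub>m Suc T"
      using mult_minus_distrib_mat[OF P one_carrier_mat N] right_mult_one_mat[OF P] by simp
    also have "(N ^\<^sub>m T - N ^\<^sub>m Suc T) * Y = N ^\<^sub>m T * Y - N ^\<^sub>m Suc T * Y"
      using P N Y by (intro minus_mult_distrib_mat) auto
    finally show ?thesis by simp
  qed
  have PS: "(\<Sum>t<T. (N ^\<^sub>m t) $$ (r,c)) = Y $$ (r,c) - (N ^\<^sub>m T * Y) $$ (r,c)"
    if rc: "r < n" "c < n" for T r c
  proof (induct T)
    case 0 show ?case using rc Y N by simp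
  next
    case (Suc T)
    have "(N ^\<^sub>m T * Y - N ^\<^sub>m Suc T * Y) $$ (r,c) = (N ^\<^sub>m T) $$ (r,c)" using step[of T] by simp
    hence "(N ^\<^sub>m T * Y) $$ (r,c) - (N ^\<^sub>m Suc T * Y) $$ (r,c) = (N ^\<^sub>m T) $$ (r,c)"
      using rc N Y by simp
    thus ?case using Suc by simp
  qed
  have lim: "(\<lambda>T. (N ^\<^sub>m T * Y) $$ (r,c)) \<longlonglongrightarrow> 0" if rc: "r < n" "c < n" for r c
  proof -
    have e: "(N ^\<^sub>m T * Y) $$ (r,c) = (\<Sum>k = 0..<n. (N ^\<^sub>m T) $$ (r,k) * Y $$ (k,c))" for T
      using rc N Y by (simp add: scalar_prod_def)
    have "(\<lambda>T. (\<Sum>k = 0..<n. (N ^\<^sub>m T) $$ (r,k) * Y $$ (k,c))) \<longlonglongrightarrow> (\<Sum>k = 0..<n. 0 * Y $$ (k,c))"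
      using dec rc unfolding decays_def by (intro tendsto_sum tendsto_mult tendsto_const) auto
    thus ?thesis unfolding e by simp
  qed
  show nY: "nonneg_mat n Y" unfolding nonneg_mat_def
  proof (intro allI impI)
    fix r c assume rc: "r < n" "c < n"
    have "(N ^\<^sub>m T * Y) $$ (r,c) \<le> Y $$ (r,c)" for T
    proof -
      have "0 \<le> (\<Sum>t<T. (N ^\<^sub>m t) $$ (r,c))"
        using pow_nonneg[OF N nn] rc unfolding nonneg_mat_def by (intro sum_nonneg) auto
      thus ?thesis using PS[OF rc, of T] by simp
    qed
    moreover have "(\<lambda>T. (N ^\<^sub>m T * Y) $$ (r,c)) \<longlonglongrightarrow> 0" by (intro lim rc)
    ultimately show "0 \<le> Y $$ (r,c)"
      by (intro LIMSEQ_le_const2[where X="\<lambda>T. (N ^\<^sub>m T * Y) $$ (r,c)"]) auto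
  qed
  fix T r c assume rc: "r < n" "c < n"
  have "0 \<le> (N ^\<^sub>m T * Y) $$ (r,c)"
  proof -
    have "(N ^\<^sub>m T * Y) $$ (r,c) = (\<Sum>k = 0..<n. (N ^\<^sub>m T) $$ (r,k) * Y $$ (k,c))"
      using rc N Y by (simp add: scalar_prod_def)
    also have "\<dots> \<ge> 0" using pow_nonneg[OF N nn, of T] nY rc unfolding nonneg_mat_def
      by (intro sum_nonneg mult_nonneg_nonneg) auto
    finally show ?thesis .
  qed
  thus "(\<Sum>t<T. (N ^\<^sub>m t) $$ (r,c)) \<le> Y $$ (r,c)" using PS[OF rc, of T] by simp
qed

lemma diag_form: fixes P Q :: "real mat"
  assumes P: "P \<in> carrier_mat n p" and Q: "Q \<in> carrier_mat p m" and k: "k < n"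
  shows "(P * Q * Q\<^sup>T * P\<^sup>T) $$ (k,k) = (\<Sum>l<m. (\<Sum>r<p. P $$ (k,r) * Q $$ (r,l))\<^sup>2)"
proof -
  have PQ: "P * Q \<in> carrier_mat n m" using P Q by auto
  have "P * Q * Q\<^sup>T * P\<^sup>T = (P * Q) * (Q\<^sup>T * P\<^sup>T)"
    using P Q by (intro assoc_mult_mat) auto
  also have "Q\<^sup>T * P\<^sup>T = (P * Q)\<^sup>T" using transpose_mult[OF P Q] by simp
  finally have e: "P * Q * Q\<^sup>T * P\<^sup>T = (P * Q) * (P * Q)\<^sup>T" .
  have e2: "(P * Q) $$ (k,l) = (\<Sum>r<p. P $$ (k,r) * Q $$ (r,l))" if "l < m" for l
    using P Q k that by (simp add: scalar_prod_def atLeast0LessThan)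
  have gen: "(R * R\<^sup>T) $$ (k,k) = (\<Sum>l<m. R $$ (k,l) * R $$ (k,l))" if "dim_row R = n" "dim_col R = m" for R :: "real mat"
    using that k by (simp add: scalar_prod_def atLeast0LessThan)
  have "(P * Q * (P * Q)\<^sup>T) $$ (k,k) = (\<Sum>l<m. (P*Q) $$ (k,l) * (P*Q) $$ (k,l))"
    using PQ by (intro gen) auto
  also have "\<dots> = (\<Sum>l<m. (\<Sum>r<p. P $$ (k,r) * Q $$ (r,l))\<^sup>2)"
    by (intro sum.cong refl) (simp add: e2 power2_eq_square)
  finally show ?thesis unfolding e .
qed

lemma pow_abs_le: fixes Z N :: "real mat"
  assumes Z: "Z \<in> carrier_mat n n" and N: "N \<in> carrier_mat n n" and nn: "nonneg_mat n N"
    and le: "\<And>r c. r < n \<Longrightarrow> c < n \<Longrightarrow> \<bar>Z $$ (r,c)\<bar> \<le> N $$ (r,c)"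
  shows "r < n \<Longrightarrow> c < n \<Longrightarrow> \<bar>(Z ^\<^sub>m t) $$ (r,c)\<bar> \<le> (N ^\<^sub>m t) $$ (r,c)"
proof (induct t arbitrary: r c)
  case 0 thus ?case using Z N by simp
next
  case (Suc t)
  have "\<bar>(Z ^\<^sub>m Suc t) $$ (r,c)\<bar> = \<bar>\<Sum>k<n. (Z ^\<^sub>m t) $$ (r,k) * Z $$ (k,c)\<bar>"
    using Suc.prems Z by (simp add: scalar_prod_def atLeast0LessThan)
  also have "\<dots> \<le> (\<Sum>k<n. \<bar>(Z ^\<^sub>m t) $$ (r,k)\<bar> * \<bar>Z $$ (k,c)\<bar>)"
    by (rule order_trans[OF sum_abs]) (simp add: abs_mult)
  also have "\<dots> \<le> (\<Sum>k<n. (N ^\<^sub>m t) $$ (r,k) * N $$ (k,c))"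
    using Suc le pow_nonneg[OF N nn, of t] unfolding nonneg_mat_def
    by (intro sum_mono mult_mono) auto
  also have "\<dots> = (N ^\<^sub>m Suc t) $$ (r,c)"
    using Suc.prems N by (simp add: scalar_prod_def atLeast0LessThan)
  finally show ?case .
qed

lemma sum_sq_le: fixes a :: "'a \<Rightarrow> real"
  assumes "\<And>t. t \<in> A \<Longrightarrow> 0 \<le> a t"
  shows "(\<Sum>t\<in>A. (a t)\<^sup>2) \<le> (\<Sum>t\<in>A. a t)\<^sup>2"
  using assms
proof (induct A rule: infinite_finite_induct)
  case (insert x F)
  have s: "0 \<le> sum a F" using insert by (intro sum_nonneg) auto
  have ax: "0 \<le> a x" using insert by auto
  have "(\<Sum>t\<in>insert x F. (a t)\<^sup>2) = (a x)\<^sup>2 + (\<Sum>t\<in>F. (a t)\<^sup>2)" using insert by simp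
  also have "\<dots> \<le> (a x)\<^sup>2 + (sum a F)\<^sup>2" using insert by simp
  also have "\<dots> \<le> (a x + sum a F)\<^sup>2" using s ax by (simp add: power2_sum)
  finally show ?case using insert by simp
qed auto

lemma W_partial: fixes Z N Y B :: "real mat"
  assumes Z: "Z \<in> carrier_mat n n" and N: "N \<in> carrier_mat n n" and nn: "nonneg_mat n N"
    and le: "\<And>r c. r < n \<Longrightarrow> c < n \<Longrightarrow> \<bar>Z $$ (r,c)\<bar> \<le> N $$ (r,c)"
    and B: "B \<in> carrier_mat n m"
    and Ybd: "\<And>T r c. r < n \<Longrightarrow> c < n \<Longrightarrow> (\<Sum>t<T. (N ^\<^sub>m t) $$ (r,c)) \<le> Y $$ (r,c)"
    and k: "k < n"
  shows "(\<Sum>t<T. ((Z ^\<^sub>m t) * B * B\<^sup>T * (Z ^\<^sub>m t)\<^sup>T) $$ (k,k))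
     \<le> (\<Sum>l<m. (\<Sum>r<n. Y $$ (k,r) * \<bar>B $$ (r,l)\<bar>)\<^sup>2)"
proof -
  have Zt: "Z ^\<^sub>m t \<in> carrier_mat n n" for t using Z by auto
  have Nt: "0 \<le> (N ^\<^sub>m t) $$ (r,c)" if "r < n" "c < n" for t r c
    using pow_nonneg[OF N nn, of t] that unfolding nonneg_mat_def by auto
  have "(\<Sum>t<T. ((Z ^\<^sub>m t) * B * B\<^sup>T * (Z ^\<^sub>m t)\<^sup>T) $$ (k,k))
     = (\<Sum>t<T. \<Sum>l<m. (\<Sum>r<n. (Z ^\<^sub>m t) $$ (k,r) * B $$ (r,l))\<^sup>2)"
    using diag_form[OF Zt B k] by simp
  also have "\<dots> \<le> (\<Sum>t<T. \<Sum>l<m. (\<Sum>r<n. (N ^\<^sub>m t) $$ (k,r) * \<bar>B $$ (r,l)\<bar>)\<^sup>2)"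
  proof (intro sum_mono)
    fix t l
    have "\<bar>\<Sum>r<n. (Z ^\<^sub>m t) $$ (k,r) * B $$ (r,l)\<bar> \<le> (\<Sum>r<n. \<bar>(Z ^\<^sub>m t) $$ (k,r)\<bar> * \<bar>B $$ (r,l)\<bar>)"
      by (rule order_trans[OF sum_abs]) (simp add: abs_mult)
    also have "\<dots> \<le> (\<Sum>r<n. (N ^\<^sub>m t) $$ (k,r) * \<bar>B $$ (r,l)\<bar>)"
      using pow_abs_le[OF Z N nn le] k by (intro sum_mono mult_right_mono) auto
    finally have "\<bar>\<Sum>r<n. (Z ^\<^sub>m t) $$ (k,r) * B $$ (r,l)\<bar> \<le> (\<Sum>r<n. (N ^\<^sub>m t) $$ (k,r) * \<bar>B $$ (r,l)\<bar>)" .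
    from power_mono[OF this, of 2]
    show "(\<Sum>r<n. (Z ^\<^sub>m t) $$ (k,r) * B $$ (r,l))\<^sup>2 \<le> (\<Sum>r<n. (N ^\<^sub>m t) $$ (k,r) * \<bar>B $$ (r,l)\<bar>)\<^sup>2"
      by simp
  qed
  also have "\<dots> = (\<Sum>l<m. \<Sum>t<T. (\<Sum>r<n. (N ^\<^sub>m t) $$ (k,r) * \<bar>B $$ (r,l)\<bar>)\<^sup>2)"
    by (rule sum.swap)
  also have "\<dots> \<le> (\<Sum>l<m. (\<Sum>t<T. \<Sum>r<n. (N ^\<^sub>m t) $$ (k,r) * \<bar>B $$ (r,l)\<bar>)\<^sup>2)"
    using Nt k by (intro sum_mono sum_sq_le sum_nonneg mult_nonneg_nonneg) auto
  also have "\<dots> \<le> (\<Sum>l<m. (\<Sum>r<n. Y $$ (k,r) * \<bar>B $$ (r,l)\<bar>)\<^sup>2)"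
  proof (intro sum_mono power_mono)
    fix l
    have "(\<Sum>t<T. \<Sum>r<n. (N ^\<^sub>m t) $$ (k,r) * \<bar>B $$ (r,l)\<bar>) = (\<Sum>r<n. (\<Sum>t<T. (N ^\<^sub>m t) $$ (k,r)) * \<bar>B $$ (r,l)\<bar>)"
      by (subst sum.swap) (simp add: sum_distrib_right)
    also have "\<dots> \<le> (\<Sum>r<n. Y $$ (k,r) * \<bar>B $$ (r,l)\<bar>)"
      using Ybd k by (intro sum_mono mult_right_mono) auto
    finally show "(\<Sum>t<T. \<Sum>r<n. (N ^\<^sub>m t) $$ (k,r) * \<bar>B $$ (r,l)\<bar>) \<le> (\<Sum>r<n. Y $$ (k,r) * \<bar>B $$ (r,l)\<bar>)" .
    show "0 \<le> (\<Sum>t<T. \<Sum>r<n. (N ^\<^sub>m t) $$ (k,r) * \<bar>B $$ (r,l)\<bar>)"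
      using Nt k by (intro sum_nonneg mult_nonneg_nonneg) auto
  qed
  finally show ?thesis .
qed

lemma d_nonneg: fixes Z B :: "real mat"
  assumes Z: "Z \<in> carrier_mat n n" and B: "B \<in> carrier_mat n m" and k: "k < n"
  shows "0 \<le> ((Z ^\<^sub>m t) * B * B\<^sup>T * (Z ^\<^sub>m t)\<^sup>T) $$ (k,k)"
  using diag_form[OF pow_carrier_mat[OF Z] B k] by (simp add: sum_nonneg)

lemma CS_sum: fixes a b :: "'a \<Rightarrow> real"
  assumes fin: "finite I"
  shows "(\<Sum>i\<in>I. a i * b i)\<^sup>2 \<le> (\<Sum>i\<in>I. (a i)\<^sup>2) * (\<Sum>i\<in>I. (b i)\<^sup>2)"
proof (cases "(\<Sum>i\<in>I. (b i)\<^sup>2) = 0")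
  case True
  hence "\<forall>i\<in>I. (b i)\<^sup>2 = 0" using fin by (subst (asm) sum_nonneg_eq_0_iff) auto
  hence "\<forall>i\<in>I. b i = 0" by auto
  thus ?thesis by simp
next
  case False
  define B where "B = (\<Sum>i\<in>I. (b i)\<^sup>2)"
  define C where "C = (\<Sum>i\<in>I. a i * b i)"
  define A where "A = (\<Sum>i\<in>I. (a i)\<^sup>2)"
  have Bp: "B > 0" using False unfolding B_def by (metis sum_nonneg zero_le_power2 order_le_neq_trans)
  define t where "t = C / B"
  have "0 \<le> (\<Sum>i\<in>I. (a i - t * b i)\<^sup>2)" by (intro sum_nonneg) auto
  also have "\<dots> = A - 2 * t * C + t\<^sup>2 * B"
    unfolding A_def B_def C_def
    by (simp add: power2_diff sum.distrib sum_subtractf sum_distrib_left algebra_simps power_mult_distrib)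
  also have "\<dots> = A - C\<^sup>2 / B" using Bp by (simp add: t_def field_simps power2_eq_square)
  finally have "C\<^sup>2 / B \<le> A" by simp
  hence "C\<^sup>2 \<le> A * B" using Bp by (simp add: field_simps)
  thus ?thesis unfolding A_def B_def C_def .
qed

lemma key_real: fixes a S P U2 x \<beta> :: real
  assumes a: "0 \<le> a" and S: "0 \<le> S" and P: "P\<^sup>2 \<le> a * U2 * S" and U: "0 \<le> U2"
    and b1: "2 * x \<le> \<beta>" and b2: "x + sqrt (x\<^sup>2 + U2) \<le> \<beta>"
  shows "2 * (x * a + P) \<le> \<beta> * (a + S)"
proof -
  define L where "L = sqrt (x\<^sup>2 + U2)"
  have L0: "\<bar>x\<bar> \<le> L" unfolding L_def using U by (metis real_sqrt_abs real_sqrt_le_mono le_add_same_cancel1)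
  have L2: "L\<^sup>2 = x\<^sup>2 + U2" unfolding L_def using U by simp
  have bx: "L \<le> \<beta> - x" using b2 L_def by simp
  have bnn: "0 \<le> \<beta>" using bx L0 by linarith
  have "L\<^sup>2 \<le> (\<beta> - x)\<^sup>2" using bx L0 by (intro power_mono) auto
  hence U2b: "U2 \<le> \<beta> * (\<beta> - 2 * x)" using L2 by (simp add: power2_eq_square algebra_simps)
  define Q where "Q = (\<beta> - 2 * x) * a + \<beta> * S"
  have Q0: "0 \<le> Q" unfolding Q_def using b1 bnn a S by (intro add_nonneg_nonneg mult_nonneg_nonneg) auto
  have "4 * ((\<beta> - 2 * x) * a) * (\<beta> * S) \<le> Q\<^sup>2"
    unfolding Q_def using sum_squares_ge_zero[of "(\<beta> - 2 * x) * a - \<beta> * S" 0]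
    by (simp add: power2_eq_square algebra_simps)
  moreover have "4 * (U2 * a * S) \<le> 4 * ((\<beta> - 2 * x) * a * (\<beta> * S))"
  proof -
    have "U2 * (a * S) \<le> (\<beta> * (\<beta> - 2 * x)) * (a * S)" using U2b a S by (intro mult_right_mono) auto
    thus ?thesis by (simp add: algebra_simps)
  qed
  ultimately have "(2 * P)\<^sup>2 \<le> Q\<^sup>2" using P by (simp add: power_mult_distrib algebra_simps)
  hence "2 * P \<le> Q" using Q0 by (rule power2_le_imp_le)
  thus ?thesis unfolding Q_def by (simp add: algebra_simps)
qed

lemma cross_bound: fixes G :: "nat \<Rightarrow> nat \<Rightarrow> real" and u :: "nat \<Rightarrow> real"
  assumes i: "i < n" and b1: "2 * u i \<le> \<beta>" and b2: "u i + sqrt (\<Sum>k<n. (u k)\<^sup>2) \<le> \<beta>"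
  shows "2 * (\<Sum>k<n. \<Sum>l<m. G k l * u k * G i l) \<le> \<beta> * (\<Sum>k<n. \<Sum>l<m. (G k l)\<^sup>2)"
proof -
  define K where "K = {..<n} - {i}"
  have finK: "finite K" unfolding K_def by auto
  have split: "{..<n} = insert i K" "i \<notin> K" using i unfolding K_def by auto
  define a where "a = (\<Sum>l<m. (G i l)\<^sup>2)"
  define S where "S = (\<Sum>k\<in>K. \<Sum>l<m. (G k l)\<^sup>2)"
  define U2 where "U2 = (\<Sum>k\<in>K. (u k)\<^sup>2)"
  define z where "z l = (\<Sum>k\<in>K. u k * G k l)" for l
  define P where "P = (\<Sum>l<m. G i l * z l)"
  have cr: "(\<Sum>k<n. \<Sum>l<m. G k l * u k * G i l) = u i * a + P"
  proof -
    have "(\<Sum>k<n. \<Sum>l<m. G k l * u k * G i l) = (\<Sum>l<m. G i l * u i * G i l) + (\<Sum>k\<in>K. \<Sum>l<m. G k l * u k * G i l)"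
      unfolding split(1) using split(2) finK by simp
    also have "(\<Sum>l<m. G i l * u i * G i l) = u i * a" unfolding a_def
      by (simp add: sum_distrib_left power2_eq_square mult_ac)
    also have "(\<Sum>k\<in>K. \<Sum>l<m. G k l * u k * G i l) = P" unfolding P_def z_def
      by (subst sum.swap) (simp add: sum_distrib_left mult_ac)
    finally show ?thesis .
  qed
  have tot: "(\<Sum>k<n. \<Sum>l<m. (G k l)\<^sup>2) = a + S" unfolding split(1) a_def S_def using split(2) finK by simp
  have un: "(\<Sum>k<n. (u k)\<^sup>2) = (u i)\<^sup>2 + U2" unfolding split(1) U2_def using split(2) finK by simp
  have p1: "P\<^sup>2 \<le> a * (\<Sum>l<m. (z l)\<^sup>2)" unfolding P_def a_def by (rule CS_sum) simp
  have "(\<Sum>l<m. (z l)\<^sup>2) \<le> (\<Sum>l<m. U2 * (\<Sum>k\<in>K. (G k l)\<^sup>2))"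
    unfolding z_def U2_def by (intro sum_mono CS_sum finK)
  also have "\<dots> = U2 * S" unfolding S_def by (simp add: sum_distrib_left sum.swap[of _ K])
  finally have p2: "(\<Sum>l<m. (z l)\<^sup>2) \<le> U2 * S" .
  have a0: "0 \<le> a" unfolding a_def by (intro sum_nonneg) auto
  have "a * (\<Sum>l<m. (z l)\<^sup>2) \<le> a * (U2 * S)" using p2 a0 by (rule mult_left_mono)
  with p1 have P2: "P\<^sup>2 \<le> a * U2 * S" by (simp add: mult_ac)
  have "2 * (u i * a + P) \<le> \<beta> * (a + S)"
    by (rule key_real) (use b1 b2 P2 un in \<open>auto simp: a_def S_def U2_def intro!: sum_nonneg\<close>)
  thus ?thesis using cr tot by simp
qed

lemma Max2_ge: fixes f :: "nat \<Rightarrow> nat \<Rightarrow> real"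
  assumes "p < n" "q < n" "p \<noteq> q"
  shows "f p q \<le> Max {f p q | p q. p < n \<and> q < n \<and> p \<noteq> q}"
proof (rule Max_ge)
  show "finite {f p q | p q. p < n \<and> q < n \<and> p \<noteq> q}"
    by (rule finite_subset[of _ "(\<lambda>(p,q). f p q) ` ({..<n} \<times> {..<n})"]) auto
  show "f p q \<in> {f p q | p q. p < n \<and> q < n \<and> p \<noteq> q}" using assms by auto
qed

lemma Max1_ge: fixes f :: "nat \<Rightarrow> real"
  assumes "k < n"
  shows "f k \<le> Max {f k | k. k < n}"
proof (rule Max_ge)
  show "finite {f k | k. k < n}"
    by (rule finite_subset[of _ "f ` {..<n}"]) auto
  show "f k \<in> {f k | k. k < n}" using assms by auto
qed

theorem theorem5p1:
  fixes A B :: "real mat" and n m T i j :: nat and w :: real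
  assumes "A \<in> carrier_mat n n" and "B \<in> carrier_mat n m"
    and "rho (abs_mat A) < 1"
    and "T > 0"
    and "i < n" and "j < n" and "i \<noteq> j"
    and "rho (abs_mat A + \<bar>w\<bar> \<cdot>\<^sub>m unit_outer n j i) < 1"
  shows "tr (W_fin T A B) \<le> tr (W_inf A B) \<and> tr (W_inf A B) \<le> tr (Hmat A B) \<and>
         tr (W_fin T (A + w \<cdot>\<^sub>m unit_outer n j i) B)
           \<le> (1 + alpha A w * beta A) * tr (Hmat A B) + (alpha A w)\<^sup>2 * gamma A * gamma_bar A B"
proof -
  note Ac = assms(1) and Bc = assms(2) and i = assms(5) and j = assms(6) and ij = assms(7)
  have n0: "n > 0" using i by auto
  define M where "M = abs_mat A"
  define E where "E = unit_outer n j i"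
  define M' where "M' = M + \<bar>w\<bar> \<cdot>\<^sub>m E"
  define A' where "A' = A + w \<cdot>\<^sub>m E"
  have Mc: "M \<in> carrier_mat n n" using Ac by (simp add: M_def abs_mat_def)
  have Ec: "E \<in> carrier_mat n n" by (simp add: E_def unit_outer_def)
  have M'c: "M' \<in> carrier_mat n n" using Mc Ec by (simp add: M'_def)
  have A'c: "A' \<in> carrier_mat n n" using Ac Ec by (simp add: A'_def)
  have Eent: "E $$ (r,c) = (if r = j \<and> c = i then 1 else 0)" if "r < n" "c < n" for r c
    using that by (simp add: E_def unit_outer_def)
  have Ment: "M $$ (r,c) = \<bar>A $$ (r,c)\<bar>" if "r < n" "c < n" for r c
    using that Ac by (simp add: M_def abs_mat_def)
  have M'ent: "M' $$ (r,c) = \<bar>A $$ (r,c)\<bar> + (if r = j \<and> c = i then \<bar>w\<bar> else 0)" if "r < n" "c < n" for r c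
    using that Mc Ec Ment Eent by (simp add: M'_def)
  have A'ent: "A' $$ (r,c) = A $$ (r,c) + (if r = j \<and> c = i then w else 0)" if "r < n" "c < n" for r c
    using that Ac Ec Eent by (simp add: A'_def)
  have nnM: "nonneg_mat n M" unfolding nonneg_mat_def using Ment by auto
  have nnM': "nonneg_mat n M'" unfolding nonneg_mat_def using M'ent by auto
  have decM: "decays n M" unfolding decays_def using pow_decay[OF Mc n0] assms(3) M_def by auto
  have decM': "decays n M'" unfolding decays_def using pow_decay[OF M'c n0] assms(8) M'_def M_def E_def by auto
  have leA: "\<bar>A $$ (r,c)\<bar> \<le> M $$ (r,c)" if "r < n" "c < n" for r c using Ment that by simp
  have leA': "\<bar>A' $$ (r,c)\<bar> \<le> M' $$ (r,c)" if "r < n" "c < n" for r c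
    using that A'ent M'ent by (auto intro: abs_triangle_ineq order_trans)
  have IMc: "1\<^sub>m n - M \<in> carrier_mat n n" using Mc by auto
  have "det (1\<^sub>m n - M) \<noteq> 0"
  proof
    assume "det (1\<^sub>m n - M) = 0"
    then obtain v where "v \<in> carrier_vec n" "v \<noteq> 0\<^sub>v n" "(1\<^sub>m n - M) *\<^sub>v v = 0\<^sub>v n"
      using det_0_iff_vec_prod_zero[OF IMc] by auto
    with decay_inj[OF Mc decM] show False by auto
  qed
  from det_non_zero_imp_unit[OF IMc this, of "()"]
  have unit: "1\<^sub>m n - M \<in> Units (ring_mat TYPE(real) n ())" .
  have "mat_inverse (1\<^sub>m n - M) \<noteq> None" using mat_inverse(1)[OF IMc, where b="()"] unit by blast
  then obtain X where mi: "mat_inverse (1\<^sub>m n - M) = Some X" by auto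
  from mat_inverse(2)[OF IMc mi] have inv: "(1\<^sub>m n - M) * X = 1\<^sub>m n" and Xc: "X \<in> carrier_mat n n" by auto
  have XA: "Xmat A = X" unfolding Xmat_def using mi Ac by (simp add: M_def)
  from neumann_bound[OF Mc nnM decM Xc inv] have nnX: "nonneg_mat n X"
    and Xbd: "\<And>T r c. r < n \<Longrightarrow> c < n \<Longrightarrow> (\<Sum>t<T. (M ^\<^sub>m t) $$ (r,c)) \<le> X $$ (r,c)" by auto
  have X0: "0 \<le> X $$ (r,c)" if "r < n" "c < n" for r c using nnX that unfolding nonneg_mat_def by auto
  define aB where "aB = abs_mat B"
  have aBc: "aB \<in> carrier_mat n m" using Bc by (simp add: aB_def abs_mat_def)
  have aBent: "aB $$ (r,l) = \<bar>B $$ (r,l)\<bar>" if "r < n" "l < m" for r l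
    using that Bc by (simp add: aB_def abs_mat_def)
  define G where "G k l = (\<Sum>r<n. X $$ (k,r) * \<bar>B $$ (r,l)\<bar>)" for k l
  have Hkk: "Hmat A B $$ (k,k) = (\<Sum>l<m. (G k l)\<^sup>2)" if k: "k < n" for k
  proof -
    have "Hmat A B $$ (k,k) = (\<Sum>l<m. (\<Sum>r<n. X $$ (k,r) * aB $$ (r,l))\<^sup>2)"
      unfolding Hmat_def XA aB_def[symmetric] using diag_form[OF Xc aBc k] by simp
    also have "\<dots> = (\<Sum>l<m. (G k l)\<^sup>2)" unfolding G_def
      by (intro sum.cong refl arg_cong[where f="\<lambda>x. x\<^sup>2"]) (simp add: aBent)
    finally show ?thesis .
  qed
  have Hc: "dim_row (Hmat A B) = n" unfolding Hmat_def XA using Xc by simp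
  have trH: "tr (Hmat A B) = (\<Sum>k<n. \<Sum>l<m. (G k l)\<^sup>2)" unfolding tr_def Hc by (simp add: Hkk)
  define d where "d k t = ((A ^\<^sub>m t) * B * B\<^sup>T * (A ^\<^sub>m t)\<^sup>T) $$ (k,k)" for k t
  have dnn: "0 \<le> d k t" if "k < n" for k t unfolding d_def by (rule d_nonneg[OF Ac Bc that])
  have dle: "(\<Sum>t<T'. d k t) \<le> Hmat A B $$ (k,k)" if k: "k < n" for k T'
    using W_partial[OF Ac Mc nnM leA Bc Xbd k, of T'] unfolding d_def Hkk[OF k] G_def by simp
  have summ: "summable (d k)" if k: "k < n" for k
    by (rule summableI_nonneg_bounded[where x="Hmat A B $$ (k,k)"]) (use dnn dle k in auto)
  have sinf: "suminf (d k) \<le> Hmat A B $$ (k,k)" if k: "k < n" for k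
    by (rule suminf_le_const[OF summ[OF k]]) (use dle k in auto)
  have sfin: "(\<Sum>t<T. d k t) \<le> suminf (d k)" if k: "k < n" for k
    by (rule sum_le_suminf[OF summ[OF k]]) (use dnn k in auto)
  have trWf: "tr (W_fin T A B) = (\<Sum>k<n. \<Sum>t<T. d k t)"
    unfolding tr_def W_fin_def d_def using Ac by simp
  have trWi: "tr (W_inf A B) = (\<Sum>k<n. suminf (d k))"
    unfolding tr_def W_inf_def d_def using Ac by simp
  have part1: "tr (W_fin T A B) \<le> tr (W_inf A B)" unfolding trWf trWi by (intro sum_mono sfin) auto
  have trH': "tr (Hmat A B) = (\<Sum>k<n. Hmat A B $$ (k,k))" unfolding tr_def Hc ..
  have part2: "tr (W_inf A B) \<le> tr (Hmat A B)" unfolding trWi trH' by (intro sum_mono sinf) auto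
  define dd where "dd = 1 - \<bar>w\<bar> * X $$ (i,j)"
  have IXent: "(\<Sum>k<n. (1\<^sub>m n - M) $$ (r,k) * X $$ (k,q)) = (if r = q then 1 else 0)"
    if "r < n" "q < n" for r q
  proof -
    have "((1\<^sub>m n - M) * X) $$ (r,q) = (if r = q then 1 else 0)" using inv that by simp
    thus ?thesis using that Mc Xc by (simp add: scalar_prod_def atLeast0LessThan)
  qed
  have Lsum: "(\<Sum>k<n. (1\<^sub>m n - M') $$ (r,k) * X $$ (k,q)) =
      (if r = q then 1 else 0) - (if r = j then \<bar>w\<bar> * X $$ (i,q) else 0)"
    if rq: "r < n" "q < n" for r q
  proof -
    have "(\<Sum>k<n. (1\<^sub>m n - M') $$ (r,k) * X $$ (k,q)) =
        (\<Sum>k<n. (1\<^sub>m n - M) $$ (r,k) * X $$ (k,q) - (if r = j \<and> k = i then \<bar>w\<bar> else 0) * X $$ (k,q))"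
      using rq Mc M'c by (intro sum.cong refl) (auto simp: M'ent Ment algebra_simps)
    also have "\<dots> = (\<Sum>k<n. (1\<^sub>m n - M) $$ (r,k) * X $$ (k,q)) - (\<Sum>k<n. (if r = j \<and> k = i then \<bar>w\<bar> else 0) * X $$ (k,q))"
      by (rule sum_subtractf)
    also have "(\<Sum>k<n. (if r = j \<and> k = i then \<bar>w\<bar> else 0) * X $$ (k,q)) = (if r = j then \<bar>w\<bar> * X $$ (i,q) else 0)"
    proof -
      have "(\<Sum>k<n. (if r = j \<and> k = i then \<bar>w\<bar> else 0) * X $$ (k,q)) =
          (\<Sum>k<n. if k = i then (if r = j then \<bar>w\<bar> * X $$ (i,q) else 0) else 0)"
        by (intro sum.cong) auto
      also have "\<dots> = (if r = j then \<bar>w\<bar> * X $$ (i,q) else 0)" using i by simp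
      finally show ?thesis .
    qed
    finally show ?thesis using IXent[OF rq] by simp
  qed
  have dd0: "dd \<noteq> 0"
  proof
    assume dd: "dd = 0"
    have w1: "\<bar>w\<bar> * X $$ (i,j) = 1" using dd dd_def by linarith
    define u where "u = col X j"
    have uc: "u \<in> carrier_vec n" by (rule carrier_vecI) (use Xc in \<open>simp add: u_def\<close>)
    have "(1\<^sub>m n - M') *\<^sub>v u = 0\<^sub>v n"
    proof (rule eq_vecI)
      fix r assume "r < dim_vec (0\<^sub>v n :: real vec)"
      hence r: "r < n" by simp
      have "((1\<^sub>m n - M') *\<^sub>v u) $ r = (\<Sum>k<n. (1\<^sub>m n - M') $$ (r,k) * X $$ (k,j))"
        using r M'c Xc j by (simp add: u_def scalar_prod_def atLeast0LessThan)
      also have "\<dots> = 0" using Lsum[OF r j] w1 by (cases "r = j") simp_all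
      finally show "((1\<^sub>m n - M') *\<^sub>v u) $ r = 0\<^sub>v n $ r" using r by simp
    qed (use M'c in simp)
    from decay_inj[OF M'c decM' uc this] have u0: "u = 0\<^sub>v n" .
    have "X $$ (k,j) = 0" if "k < n" for k
      using arg_cong[OF u0, of "\<lambda>v. v $ k"] that Xc j by (simp add: u_def)
    hence "(\<Sum>k<n. (1\<^sub>m n - M) $$ (j,k) * X $$ (k,j)) = 0" by (intro sum.neutral) auto
    with IXent[OF j j] show False by simp
  qed
  define c where "c = \<bar>w\<bar> / dd"
  define Y where "Y = mat n n (\<lambda>(r,s). X $$ (r,s) + c * X $$ (r,j) * X $$ (i,s))"
  have Yc: "Y \<in> carrier_mat n n" by (simp add: Y_def)
  have invY: "(1\<^sub>m n - M') * Y = 1\<^sub>m n"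
  proof (rule eq_matI)
    fix r s assume "r < dim_row (1\<^sub>m n :: real mat)" "s < dim_col (1\<^sub>m n :: real mat)"
    hence r: "r < n" and s: "s < n" by auto
    have "((1\<^sub>m n - M') * Y) $$ (r,s) = (\<Sum>k<n. (1\<^sub>m n - M') $$ (r,k) * (X $$ (k,s) + c * X $$ (k,j) * X $$ (i,s)))"
      using r s M'c by (simp add: Y_def scalar_prod_def atLeast0LessThan)
    also have "\<dots> = (\<Sum>k<n. (1\<^sub>m n - M') $$ (r,k) * X $$ (k,s)) + c * X $$ (i,s) * (\<Sum>k<n. (1\<^sub>m n - M') $$ (r,k) * X $$ (k,j))"
      by (simp add: sum.distrib sum_distrib_left algebra_simps)
    also have "\<dots> = (if r = s then 1 else 0)"
    proof -
      have cdd: "c * (1 - \<bar>w\<bar> * X $$ (i,j)) = \<bar>w\<bar>" using dd0 by (simp add: c_def dd_def)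
      have e: "c * X $$ (i,s) * (1 - \<bar>w\<bar> * X $$ (i,j)) = X $$ (i,s) * \<bar>w\<bar>"
      proof -
        have "c * X $$ (i,s) * (1 - \<bar>w\<bar> * X $$ (i,j)) = X $$ (i,s) * (c * (1 - \<bar>w\<bar> * X $$ (i,j)))"
          by (simp only: mult_ac)
        thus ?thesis by (simp only: cdd)
      qed
      show ?thesis unfolding Lsum[OF r s] Lsum[OF r j]
      proof (cases "r = j")
        case True
        thus "(if r = s then 1 else 0) - (if r = j then \<bar>w\<bar> * X $$ (i,s) else 0) +
          c * X $$ (i,s) * ((if r = j then 1 else 0) - (if r = j then \<bar>w\<bar> * X $$ (i,j) else 0)) = (if r = s then 1 else 0)"
          using e by (simp add: mult_ac)
      qed simp
    qed
    finally show "((1\<^sub>m n - M') * Y) $$ (r,s) = 1\<^sub>m n $$ (r,s)" using r s by simp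
  qed (use M'c Yc in auto)
  from neumann_bound[OF M'c nnM' decM' Yc invY] have nnY: "nonneg_mat n Y"
    and Ybd: "\<And>T r c. r < n \<Longrightarrow> c < n \<Longrightarrow> (\<Sum>t<T. (M' ^\<^sub>m t) $$ (r,c)) \<le> Y $$ (r,c)" by auto
  have ddpos: "dd > 0"
  proof (rule ccontr)
    assume "\<not> dd > 0"
    hence ddn: "dd < 0" using dd0 by simp
    hence xw: "\<bar>w\<bar> * X $$ (i,j) > 1" by (simp add: dd_def)
    have xp: "X $$ (i,j) > 0" using xw X0[OF i j] by (cases "X $$ (i,j) = 0") auto
    have "0 \<le> Y $$ (i,j)" using nnY i j unfolding nonneg_mat_def by auto
    also have "Y $$ (i,j) = X $$ (i,j) / dd"
    proof -
      have "Y $$ (i,j) = X $$ (i,j) + c * X $$ (i,j) * X $$ (i,j)" using i j by (simp add: Y_def)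
      also have "\<dots> = X $$ (i,j) * (dd + \<bar>w\<bar> * X $$ (i,j)) / dd" using dd0
        by (simp add: c_def divide_simps) (simp add: algebra_simps)
      also have "dd + \<bar>w\<bar> * X $$ (i,j) = 1" by (simp add: dd_def)
      finally show ?thesis by simp
    qed
    also have "\<dots> < 0" using xp ddn by (simp add: divide_pos_neg)
    finally show False by simp
  qed
  have c0: "0 \<le> c" using ddpos by (simp add: c_def)
  have Yent: "Y $$ (r,s) = X $$ (r,s) + c * X $$ (r,j) * X $$ (i,s)" if "r < n" "s < n" for r s
    using that by (simp add: Y_def)
  have Yrow: "(\<Sum>r<n. Y $$ (k,r) * \<bar>B $$ (r,l)\<bar>) = G k l + c * X $$ (k,j) * G i l" if k: "k < n" for k l
  proof -
    have "(\<Sum>r<n. Y $$ (k,r) * \<bar>B $$ (r,l)\<bar>) =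
        (\<Sum>r<n. X $$ (k,r) * \<bar>B $$ (r,l)\<bar> + c * X $$ (k,j) * (X $$ (i,r) * \<bar>B $$ (r,l)\<bar>))"
      using k by (intro sum.cong refl) (simp add: Yent algebra_simps)
    also have "\<dots> = G k l + c * X $$ (k,j) * G i l" by (simp add: G_def sum.distrib sum_distrib_left)
    finally show ?thesis .
  qed
  define d' where "d' k t = ((A' ^\<^sub>m t) * B * B\<^sup>T * (A' ^\<^sub>m t)\<^sup>T) $$ (k,k)" for k t
  have d'le: "(\<Sum>t<T. d' k t) \<le> (\<Sum>l<m. (G k l + c * X $$ (k,j) * G i l)\<^sup>2)" if k: "k < n" for k
  proof -
    have "(\<Sum>t<T. d' k t) \<le> (\<Sum>l<m. (\<Sum>r<n. Y $$ (k,r) * \<bar>B $$ (r,l)\<bar>)\<^sup>2)"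
      using W_partial[OF A'c M'c nnM' leA' Bc Ybd k, of T] unfolding d'_def by simp
    also have "\<dots> = (\<Sum>l<m. (G k l + c * X $$ (k,j) * G i l)\<^sup>2)" using Yrow[OF k] by simp
    finally show ?thesis .
  qed
  have trW': "tr (W_fin T (A + w \<cdot>\<^sub>m unit_outer n j i) B) = (\<Sum>k<n. \<Sum>t<T. d' k t)"
    unfolding E_def[symmetric] A'_def[symmetric] tr_def W_fin_def d'_def using A'c by simp
  define u where "u k = X $$ (k,j)" for k
  define tH where "tH = (\<Sum>k<n. \<Sum>l<m. (G k l)\<^sup>2)"
  define Cr where "Cr = (\<Sum>k<n. \<Sum>l<m. G k l * u k * G i l)"
  define gj where "gj = (\<Sum>k<n. (u k)\<^sup>2)"
  define hi where "hi = (\<Sum>l<m. (G i l)\<^sup>2)"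
  have expand: "(\<Sum>k<n. \<Sum>l<m. (G k l + c * X $$ (k,j) * G i l)\<^sup>2) = tH + 2 * c * Cr + c\<^sup>2 * (gj * hi)"
  proof -
    have "(\<Sum>k<n. \<Sum>l<m. (G k l + c * X $$ (k,j) * G i l)\<^sup>2) =
        (\<Sum>k<n. \<Sum>l<m. (G k l)\<^sup>2 + 2 * c * (G k l * u k * G i l) + c\<^sup>2 * ((u k)\<^sup>2 * (G i l)\<^sup>2))"
      by (intro sum.cong refl) (simp add: u_def power2_eq_square algebra_simps)
    also have "\<dots> = tH + 2 * c * Cr + c\<^sup>2 * (\<Sum>k<n. \<Sum>l<m. (u k)\<^sup>2 * (G i l)\<^sup>2)"
      by (simp add: tH_def Cr_def sum.distrib sum_distrib_left)
    also have "(\<Sum>k<n. \<Sum>l<m. (u k)\<^sup>2 * (G i l)\<^sup>2) = gj * hi" by (simp add: gj_def hi_def sum_product)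
    finally show ?thesis .
  qed
  have dimA: "dim_row A = n" using Ac by simp
  have b_eq: "beta A = max (Max {2 * X $$ (p,q) | p q. p < n \<and> q < n \<and> p \<noteq> q})
      (Max {X $$ (p,q) | p q. p < n \<and> q < n \<and> p \<noteq> q} + Max {col_norm X q | q. q < n})"
    unfolding beta_def Let_def XA dimA ..
  have cn: "col_norm X j = sqrt gj" unfolding col_norm_def gj_def u_def using Xc by simp
  have m1: "2 * u i \<le> Max {2 * X $$ (p,q) | p q. p < n \<and> q < n \<and> p \<noteq> q}"
    using Max2_ge[of i n j "\<lambda>p q. 2 * X $$ (p,q)"] i j ij by (simp add: u_def)
  have m2: "u i \<le> Max {X $$ (p,q) | p q. p < n \<and> q < n \<and> p \<noteq> q}"
    using Max2_ge[of i n j "\<lambda>p q. X $$ (p,q)"] i j ij by (simp add: u_def)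
  have m3: "sqrt gj \<le> Max {col_norm X q | q. q < n}"
    using Max1_ge[of j n "col_norm X"] j cn by simp
  have b1: "2 * u i \<le> beta A" unfolding b_eq using m1 by linarith
  have b2: "u i + sqrt gj \<le> beta A" unfolding b_eq using m2 m3 by linarith
  have crb: "2 * Cr \<le> beta A * tH" unfolding Cr_def tH_def
    by (rule cross_bound[OF i b1 b2[unfolded gj_def]])
  have ui0: "0 \<le> u i" using X0[OF i j] by (simp add: u_def)
  have beta0: "0 \<le> beta A" using b2 ui0 by (smt (verit) real_sqrt_ge_zero gj_def sum_nonneg zero_le_power2)
  have tH0: "0 \<le> tH" unfolding tH_def by (intro sum_nonneg) auto
  have gj0: "0 \<le> gj" unfolding gj_def by (intro sum_nonneg) auto
  have hi0: "0 \<le> hi" unfolding hi_def by (intro sum_nonneg) auto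
  have cal: "c \<le> alpha A w"
  proof -
    have "alpha_pq A w i j \<le> alpha A w" unfolding alpha_def dimA
      using Max2_ge[of i n j "alpha_pq A w"] i j ij by simp
    moreover have "alpha_pq A w i j = c" unfolding alpha_pq_def XA c_def dd_def ..
    ultimately show ?thesis by simp
  qed
  have ggam: "gj \<le> gamma A"
  proof -
    have "((Xmat A)\<^sup>T * Xmat A) $$ (j,j) \<le> gamma A" unfolding gamma_def dimA
      using Max1_ge[of j n "\<lambda>k. ((Xmat A)\<^sup>T * Xmat A) $$ (k,k)"] j by simp
    moreover have "((Xmat A)\<^sup>T * Xmat A) $$ (j,j) = gj" unfolding XA
      using Xc j by (simp add: gj_def u_def scalar_prod_def atLeast0LessThan power2_eq_square)
    ultimately show ?thesis by simp
  qed
  have hgam: "hi \<le> gamma_bar A B"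
  proof -
    have "Hmat A B $$ (i,i) \<le> gamma_bar A B" unfolding gamma_bar_def dimA
      using Max1_ge[of i n "\<lambda>k. Hmat A B $$ (k,k)"] i by simp
    thus ?thesis using Hkk[OF i] by (simp add: hi_def)
  qed
  have t1: "2 * c * Cr \<le> alpha A w * beta A * tH"
  proof -
    have "2 * c * Cr = c * (2 * Cr)" by simp
    also have "\<dots> \<le> c * (beta A * tH)" using crb c0 by (rule mult_left_mono)
    also have "\<dots> \<le> alpha A w * (beta A * tH)" using cal beta0 tH0 by (intro mult_right_mono) auto
    finally show ?thesis by simp
  qed
  have t2: "c\<^sup>2 * (gj * hi) \<le> (alpha A w)\<^sup>2 * gamma A * gamma_bar A B"
  proof -
    have "c\<^sup>2 \<le> (alpha A w)\<^sup>2" using c0 cal by (intro power_mono) auto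
    moreover have "gj * hi \<le> gamma A * gamma_bar A B" using ggam hgam gj0 hi0
      by (intro mult_mono) auto
    ultimately have "c\<^sup>2 * (gj * hi) \<le> (alpha A w)\<^sup>2 * (gamma A * gamma_bar A B)"
      using gj0 hi0 by (rule_tac mult_mono) auto
    thus ?thesis by (simp add: mult_ac)
  qed
  have part3: "tr (W_fin T (A + w \<cdot>\<^sub>m unit_outer n j i) B)
      \<le> (1 + alpha A w * beta A) * tr (Hmat A B) + (alpha A w)\<^sup>2 * gamma A * gamma_bar A B"
  proof -
    have "tr (W_fin T (A + w \<cdot>\<^sub>m unit_outer n j i) B) \<le> (\<Sum>k<n. \<Sum>l<m. (G k l + c * X $$ (k,j) * G i l)\<^sup>2)"
      unfolding trW' by (intro sum_mono d'le) auto
    also have "\<dots> = tH + 2 * c * Cr + c\<^sup>2 * (gj * hi)" by (rule expand)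
    also have "\<dots> \<le> tH + alpha A w * beta A * tH + (alpha A w)\<^sup>2 * gamma A * gamma_bar A B"
      using t1 t2 by linarith
    also have "\<dots> = (1 + alpha A w * beta A) * tr (Hmat A B) + (alpha A w)\<^sup>2 * gamma A * gamma_bar A B"
      unfolding trH tH_def by (simp add: algebra_simps)
    finally show ?thesis .
  qed
  show ?thesis using part1 part2 part3 by simp
qed

end
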